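(* Let $E$ be a Banach lattice. If $(x_m)$ is a disjoint sequence in $E$ such that $\{x_m\}$ is an almost Dunford–Pettis set, then $\{x_m\}$ is a Dunford–Pettis set.
   Context: A bounded subset $A$ of a Banach lattice $E$ is almost Dunford–Pettis if every disjoint weakly null sequence in $E'$ converges uniformly to zero on $A$. A bounded subset $A$ of a Banach space $X$ is Dunford–Pettis if every weakly null sequence $(x_n')$ in $X'$ converges uniformly to zero on $A$ (equivalently, $T(A)$ is relatively compact in $c_0$ for every weakly compact operator $T: X \to c_0$). *)

theory Defs
  imports "HOL-Analysis.Analysis"
begin

class banach_lattice = banach + ordered_real_vector + lattice +
  assumes lattice_norm: "sup x (- x) \<le> sup y (- y) \<Longrightarrow> norm x \<le> norm y"

definition lmod :: "'a::banach_lattice \<Rightarrow> 'a" where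
  "lmod x = sup x (- x)"

definition disjoint_elems :: "'a::banach_lattice \<Rightarrow> 'a \<Rightarrow> bool" where
  "disjoint_elems x y \<longleftrightarrow> inf (lmod x) (lmod y) = 0"

text \<open>The dual E' is the space of bounded linear functionals ('a \<Rightarrow>L real),
  with its canonical (Riesz-Kantorovich) lattice structure:
  for x \<ge> 0, |f|(x) = sup { |f y| : |y| \<le> x } and
  (g inf h)(x) = inf { g y + h (x - y) : 0 \<le> y \<le> x }.\<close>
definition dual_abs :: "('a::banach_lattice \<Rightarrow>\<^sub>L real) \<Rightarrow> 'a \<Rightarrow> real" where
  "dual_abs f x = Sup {\<bar>blinfun_apply f y\<bar> | y. lmod y \<le> x}"

definition disjoint_dual :: "('a::banach_lattice \<Rightarrow>\<^sub>L real) \<Rightarrow> ('a \<Rightarrow>\<^sub>L real) \<Rightarrow> bool" where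
  "disjoint_dual f g \<longleftrightarrow>
     (\<forall>x. 0 \<le> x \<longrightarrow> Inf {dual_abs f y + dual_abs g (x - y) | y. 0 \<le> y \<and> y \<le> x} = 0)"

definition weakly_null_dual :: "(nat \<Rightarrow> ('a::banach_lattice \<Rightarrow>\<^sub>L real)) \<Rightarrow> bool" where
  "weakly_null_dual f \<longleftrightarrow>
     (\<forall>\<phi> :: ('a \<Rightarrow>\<^sub>L real) \<Rightarrow>\<^sub>L real. (\<lambda>n. blinfun_apply \<phi> (f n)) \<longlonglongrightarrow> 0)"

definition unif_null_on :: "(nat \<Rightarrow> ('a::banach_lattice \<Rightarrow>\<^sub>L real)) \<Rightarrow> 'a set \<Rightarrow> bool" where
  "unif_null_on f A \<longleftrightarrow>
     (\<forall>e>0. \<forall>\<^sub>F n in sequentially. \<forall>x\<in>A. \<bar>blinfun_apply (f n) x\<bar> < e)"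

definition almost_DP_set :: "'a::banach_lattice set \<Rightarrow> bool" where
  "almost_DP_set A \<longleftrightarrow> bounded A \<and>
     (\<forall>f. (\<forall>i j. i \<noteq> j \<longrightarrow> disjoint_dual (f i) (f j)) \<and> weakly_null_dual f
          \<longrightarrow> unif_null_on f A)"

definition DP_set :: "'a::banach_lattice set \<Rightarrow> bool" where
  "DP_set A \<longleftrightarrow> bounded A \<and> (\<forall>f. weakly_null_dual f \<longrightarrow> unif_null_on f A)"

end

theory Submission
  imports Defs "HOL-Library.Lattice_Algebras"
begin

subclass (in banach_lattice) lattice_ab_group_add ..

lemma sup_neg_ge0: "0 \<le> sup (x::'a::lattice_ab_group_add) (- x)"
proof -
  have "0 = x + - x" by simp
  also have "\<dots> \<le> sup x (-x) + sup x (-x)" by (intro add_mono) auto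
  finally show ?thesis by simp
qed

lemma lmod_ge0: "0 \<le> lmod (x::'a::banach_lattice)"
  unfolding lmod_def by (rule sup_neg_ge0)

lemma lmod_pos: "0 \<le> (x::'a::banach_lattice) \<Longrightarrow> lmod x = x"
  unfolding lmod_def by (simp add: sup_absorb1 order_trans[of "-x" 0 x])

lemma pn_disj: "inf (pprt x) (- nprt x) = (0::'a::lattice_ab_group_add)"
proof -
  have e: "- nprt x = pprt x - x"
  proof -
    have "pprt x - x = sup x 0 + - x" unfolding pprt_def by simp
    also have "\<dots> = sup (x + -x) (0 + -x)" by (rule add_sup_distrib_right)
    also have "\<dots> = sup (-x) 0" by (simp add: sup_commute)
    also have "\<dots> = - nprt x" unfolding nprt_def by (simp add: neg_inf_eq_sup)
    finally show ?thesis by simp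
  qed
  have "inf (pprt x) (pprt x - x) = pprt x + inf 0 (- x)"
    by (simp add: add_inf_distrib_left)
  also have "inf 0 (-x) = - pprt x" unfolding pprt_def by (simp add: neg_sup_eq_inf inf_commute)
  finally show ?thesis using e by simp
qed

lemma lmod_pn: "lmod (x::'a::banach_lattice) = pprt x - nprt x"
proof -
  have "lmod x = sup (sup x (-x)) 0" unfolding lmod_def
    by (simp add: sup_absorb1 sup_neg_ge0)
  also have "\<dots> = sup (pprt x) (- nprt x)"
    unfolding pprt_def nprt_def neg_inf_eq_sup
    by (simp add: sup_assoc sup_left_commute sup_commute)
  also have "\<dots> = pprt x - nprt x"
    using add_eq_inf_sup[of "pprt x" "- nprt x"] pn_disj[of x] by simp
  finally show ?thesis .
qed

lemma pprt_le_lmod: "pprt x \<le> lmod (x::'a::banach_lattice)"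
  unfolding lmod_pn by (simp add: nprt_le_zero)

lemma nprt_le_lmod: "- nprt x \<le> lmod (x::'a::banach_lattice)"
  unfolding lmod_pn by simp

lemma norm_le_lmod: "lmod y \<le> (x::'a::banach_lattice) \<Longrightarrow> norm y \<le> norm x"
proof -
  assume a: "lmod y \<le> x"
  then have "0 \<le> x" using lmod_ge0 order_trans by blast
  then have "lmod x = x" by (rule lmod_pos)
  then show ?thesis using a lattice_norm[of y x] unfolding lmod_def by simp
qed

lemma norm_mono_pos: "0 \<le> (y::'a::banach_lattice) \<Longrightarrow> y \<le> x \<Longrightarrow> norm y \<le> norm x"
  by (simp add: lmod_pos norm_le_lmod)

lemma norm_lmod: "norm (lmod (x::'a::banach_lattice)) = norm x"
proof -
  have "lmod (lmod x) = lmod x" by (simp add: lmod_ge0 lmod_pos)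
  then have "norm (lmod x) \<le> norm x" "norm x \<le> norm (lmod x)"
    using lattice_norm[of "lmod x" x] lattice_norm[of x "lmod x"] unfolding lmod_def by simp_all
  then show ?thesis by linarith
qed

lemma inf_add_le:
  fixes a b w :: "'a::lattice_ab_group_add"
  assumes "0 \<le> a" "0 \<le> b" "0 \<le> w"
  shows "inf (a+b) w \<le> inf a w + inf b w"
proof -
  have "inf a w + inf b w = inf (inf (a+b) (a+w)) (inf (w+b) (w+w))"
    by (simp add: add_inf_distrib_left add_inf_distrib_right inf_aci)
  moreover have "w \<le> a + w" "w \<le> w + b" "w \<le> w + w" using assms
    by (simp_all add: add_increasing add_increasing2)
  then have "inf (a+b) w \<le> inf (inf (a+b) (a+w)) (inf (w+b) (w+w))"
    by (meson inf.cobounded1 inf.cobounded2 le_inf_iff order_trans)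
  ultimately show ?thesis by simp
qed

lemma inf_add_disj:
  fixes a b z :: "'a::lattice_ab_group_add"
  assumes "0 \<le> a" "0 \<le> b" "inf a b = 0" "0 \<le> z"
  shows "inf z (a+b) = inf z a + inf z b"
proof (rule antisym)
  show "inf z (a+b) \<le> inf z a + inf z b"
    using inf_add_le[OF assms(1,2,4)] by (simp add: inf_commute)
  have i0: "inf (inf z a) (inf z b) = 0"
  proof (rule antisym)
    show "inf (inf z a) (inf z b) \<le> 0" using assms(3)
      by (metis inf.cobounded2 inf_mono)
    show "0 \<le> inf (inf z a) (inf z b)" using assms by simp
  qed
  have "inf z a + inf z b = sup (inf z a) (inf z b)"
    using add_eq_inf_sup[of "inf z a" "inf z b"] i0 by simp
  then have "inf z a + inf z b \<le> z" by simp
  moreover have "inf z a + inf z b \<le> a + b" by (intro add_mono) auto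
  ultimately show "inf z a + inf z b \<le> inf z (a+b)" by simp
qed

lemma scaleR_inf:
  fixes x y :: "'a::banach_lattice"
  assumes "0 < c"
  shows "c *\<^sub>R inf x y = inf (c *\<^sub>R x) (c *\<^sub>R y)"
proof (rule antisym)
  show "c *\<^sub>R inf x y \<le> inf (c *\<^sub>R x) (c *\<^sub>R y)"
    using assms by (intro le_infI scaleR_left_mono) auto
  let ?m = "inf (c *\<^sub>R x) (c *\<^sub>R y)"
  have ex: "inverse c *\<^sub>R (c *\<^sub>R x) = x" "inverse c *\<^sub>R (c *\<^sub>R y) = y"
    using assms by simp_all
  have "inverse c *\<^sub>R ?m \<le> inverse c *\<^sub>R (c *\<^sub>R x)"
    using assms by (intro scaleR_left_mono) auto
  moreover have "inverse c *\<^sub>R ?m \<le> inverse c *\<^sub>R (c *\<^sub>R y)"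
    using assms by (intro scaleR_left_mono) auto
  ultimately have "inverse c *\<^sub>R ?m \<le> inf x y"
    unfolding ex by (rule le_infI)
  then have "c *\<^sub>R (inverse c *\<^sub>R ?m) \<le> c *\<^sub>R inf x y"
    using assms by (intro scaleR_left_mono) auto
  moreover have "c *\<^sub>R (inverse c *\<^sub>R ?m) = ?m" using assms by simp
  ultimately show "?m \<le> c *\<^sub>R inf x y" by simp
qed

lemma scaleR_sup:
  fixes x y :: "'a::banach_lattice"
  assumes "0 < c"
  shows "c *\<^sub>R sup x y = sup (c *\<^sub>R x) (c *\<^sub>R y)"
proof -
  have "sup x y = - inf (-x) (-y)" by (rule sup_eq_neg_inf)
  then have "c *\<^sub>R sup x y = c *\<^sub>R (- inf (-x) (-y))" by (rule arg_cong)
  also have "\<dots> = - (c *\<^sub>R inf (-x) (-y))" by (rule scaleR_minus_right)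
  also have "\<dots> = - inf (- (c *\<^sub>R x)) (- (c *\<^sub>R y))"
    using scaleR_inf[OF assms, of "-x" "-y"] by simp
  also have "\<dots> = sup (c *\<^sub>R x) (c *\<^sub>R y)" by (rule sup_eq_neg_inf[symmetric])
  finally show ?thesis .
qed

lemma pprt_scale: "0 \<le> c \<Longrightarrow> pprt (c *\<^sub>R (x::'a::banach_lattice)) = c *\<^sub>R pprt x"
proof (cases "c = 0")
  case False
  assume "0 \<le> c"
  with False have "0 < c" by simp
  from scaleR_sup[OF this, of x 0] show ?thesis unfolding pprt_def by simp
qed (simp add: pprt_def)

lemma nprt_scale: "0 \<le> c \<Longrightarrow> nprt (c *\<^sub>R (x::'a::banach_lattice)) = c *\<^sub>R nprt x"
proof (cases "c = 0")
  case False
  assume "0 \<le> c"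
  with False have "0 < c" by simp
  from scaleR_inf[OF this, of x 0] show ?thesis unfolding nprt_def by simp
qed (simp add: nprt_def)

lemma disj_scale:
  fixes u v :: "'a::banach_lattice"
  assumes "0 \<le> u" "0 \<le> v" "inf u v = 0" "0 \<le> s" "0 \<le> t"
  shows "inf (s *\<^sub>R u) (t *\<^sub>R v) = 0"
proof (rule antisym)
  define c where "c = s + t + 1"
  have c: "0 < c" "s \<le> c" "t \<le> c" using assms unfolding c_def by auto
  have "s *\<^sub>R u \<le> c *\<^sub>R u" using assms c by (intro scaleR_right_mono)
  moreover have "t *\<^sub>R v \<le> c *\<^sub>R v" using assms c by (intro scaleR_right_mono)
  ultimately have "inf (s *\<^sub>R u) (t *\<^sub>R v) \<le> inf (c *\<^sub>R u) (c *\<^sub>R v)"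
    by (rule inf_mono)
  also have "\<dots> = c *\<^sub>R inf u v" by (rule scaleR_inf[OF c(1), symmetric])
  finally show "inf (s *\<^sub>R u) (t *\<^sub>R v) \<le> 0" using assms by simp
  show "0 \<le> inf (s *\<^sub>R u) (t *\<^sub>R v)" using assms by (simp add: scaleR_nonneg_nonneg)
qed

lemma inf_scale_mono: "0 \<le> (u::'a::banach_lattice) \<Longrightarrow> t \<le> s \<Longrightarrow> inf z (t *\<^sub>R u) \<le> inf z (s *\<^sub>R u)"
  by (intro inf_mono order_refl scaleR_right_mono)

lemma riesz_decomp:
  fixes y a b :: "'a::lattice_ab_group_add"
  assumes "0 \<le> y" "y \<le> a + b" "0 \<le> a" "0 \<le> b"
  shows "\<exists>y1 y2. y = y1 + y2 \<and> 0 \<le> y1 \<and> y1 \<le> a \<and> 0 \<le> y2 \<and> y2 \<le> b"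
proof (intro exI conjI)
  show "y = inf y a + (y - inf y a)" by (metis add.commute diff_add_cancel)
  show "0 \<le> inf y a" "inf y a \<le> a" using assms by auto
  show "0 \<le> y - inf y a" using inf_le1[of y a] by (simp only: diff_ge_0_iff_ge)
  have "y - inf y a = y + sup (-y) (-a)" by (rule diff_inf_eq_sup)
  also have "\<dots> = sup (y + -y) (y + -a)" by (rule add_sup_distrib_left)
  also have "\<dots> = sup 0 (y - a)" by (simp only: add.right_inverse diff_conv_add_uminus)
  also have "\<dots> \<le> b" proof (rule le_supI)
    show "0 \<le> b" by fact
    show "y - a \<le> b" using assms(2) by (metis add.commute diff_le_eq)
  qed
  finally show "y - inf y a \<le> b" .
qed

definition posf :: "('a::banach_lattice \<Rightarrow>\<^sub>L real) \<Rightarrow> bool" where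
  "posf p \<longleftrightarrow> (\<forall>x. 0 \<le> x \<longrightarrow> 0 \<le> p x)"

lemma posf_nonneg: "posf p \<Longrightarrow> 0 \<le> x \<Longrightarrow> 0 \<le> p x"
  unfolding posf_def by blast

lemma posf_mono: "posf p \<Longrightarrow> x \<le> y \<Longrightarrow> p x \<le> p y"
proof -
  assume "posf p" "x \<le> y"
  then have "0 \<le> p (y - x)" by (intro posf_nonneg) (simp_all only: diff_ge_0_iff_ge)
  then show ?thesis by (simp only: blinfun.diff_right diff_ge_0_iff_ge)
qed

lemma pn_split: "y = pprt y - (- nprt (y::'a::lattice_ab_group_add))"
  by (simp only: diff_minus_eq_add prts[symmetric])

lemma blinfun_pn: "blinfun_apply f y = f (pprt y) - f (- nprt y)"
  by (subst pn_split) (rule blinfun.diff_right)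

lemma lmod_pn': "lmod y = pprt y + (- nprt y)"
  by (simp only: lmod_pn diff_conv_add_uminus)

lemma posf_abs: "posf p \<Longrightarrow> \<bar>p y\<bar> \<le> p (lmod y)"
proof -
  assume p: "posf p"
  have "p y = p (pprt y) - p (- nprt y)" by (rule blinfun_pn)
  moreover have "p (lmod y) = p (pprt y) + p (- nprt y)"
    unfolding lmod_pn' by (rule blinfun.add_right)
  moreover have "0 \<le> p (pprt y)" "0 \<le> p (- nprt y)"
    using p by (auto intro: posf_nonneg)
  ultimately show ?thesis by linarith
qed

lemma posf_add: "posf p \<Longrightarrow> posf q \<Longrightarrow> posf (p + q)"
  unfolding posf_def by (simp add: plus_blinfun.rep_eq)

lemma posf_scale: "posf p \<Longrightarrow> 0 \<le> c \<Longrightarrow> posf (c *\<^sub>R p)"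
  unfolding posf_def by (simp add: blinfun.scaleR_left)

lemma blinfun_eq_on_pos:
  fixes f g :: "'a::banach_lattice \<Rightarrow>\<^sub>L real"
  assumes "\<And>a. 0 \<le> a \<Longrightarrow> f a = g a"
  shows "f = g"
proof (rule blinfun_eqI)
  fix y :: 'a
  show "f y = g y" using assms[of "pprt y"] assms[of "- nprt y"] blinfun_pn[of f y] blinfun_pn[of g y]
    by simp
qed

section \<open>Extension from the positive cone\<close>

lemma abel_aux:
  fixes A N p1 n1 p2 n2 :: "'a::ab_group_add"
  assumes "A + N = p1 + n1 + (p2 + n2)"
  shows "A + (- n1) + (- n2) = p1 + p2 + (- N)"
proof -
  have "A = p1 + n1 + (p2 + n2) - N" using assms by (simp add: eq_diff_eq)
  then show ?thesis by (simp add: algebra_simps)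
qed

lemma pn_add:
  fixes y z :: "'a::lattice_ab_group_add"
  shows "pprt (y+z) + (- nprt y) + (- nprt z) = pprt y + pprt z + (- nprt (y+z))"
  by (rule abel_aux) (simp only: prts[symmetric])

lemma cone_ext:
  fixes S :: "'a::banach_lattice \<Rightarrow> real"
  assumes add: "\<And>a b. 0 \<le> a \<Longrightarrow> 0 \<le> b \<Longrightarrow> S (a + b) = S a + S b"
    and hom: "\<And>c a. 0 \<le> c \<Longrightarrow> 0 \<le> a \<Longrightarrow> S (c *\<^sub>R a) = c * S a"
    and nonneg: "\<And>a. 0 \<le> a \<Longrightarrow> 0 \<le> S a"
    and bnd: "\<And>a. 0 \<le> a \<Longrightarrow> S a \<le> K * norm a"
  shows "\<exists>p. posf p \<and> (\<forall>a. 0 \<le> a \<longrightarrow> p a = S a)"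
proof -
  define E where "E y = S (pprt y) - S (- nprt y)" for y
  have S0: "S 0 = 0" using add[of 0 0] by simp
  have nn1: "0 \<le> pprt w" for w :: 'a by simp
  have nn2: "0 \<le> - nprt w" for w :: 'a by simp
  have Eadd: "E (y + z) = E y + E z" for y z
  proof -
    have "S (pprt (y+z) + (- nprt y) + (- nprt z)) = S (pprt y + pprt z + (- nprt (y+z)))"
      by (simp only: pn_add)
    moreover have "S (pprt (y+z) + (- nprt y) + (- nprt z)) = S (pprt (y+z)) + S (- nprt y) + S (- nprt z)"
      by (simp only: add[OF add_nonneg_nonneg[OF nn1 nn2] nn2] add[OF nn1 nn2])
    moreover have "S (pprt y + pprt z + (- nprt (y+z))) = S (pprt y) + S (pprt z) + S (- nprt (y+z))"
      by (simp only: add[OF add_nonneg_nonneg[OF nn1 nn1] nn2] add[OF nn1 nn1])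
    ultimately show ?thesis unfolding E_def by linarith
  qed
  have Escale: "E (c *\<^sub>R y) = c *\<^sub>R E y" for c y
  proof (cases "0 \<le> c")
    case True
    have "E (c *\<^sub>R y) = S (c *\<^sub>R pprt y) - S (c *\<^sub>R (- nprt y))"
      unfolding E_def using True by (simp only: pprt_scale nprt_scale scaleR_minus_right)
    also have "\<dots> = c * S (pprt y) - c * S (- nprt y)"
      using True by (simp only: hom zero_le_pprt neg_0_le_iff_le nprt_le_zero)
    finally show ?thesis unfolding E_def by (simp add: right_diff_distrib)
  next
    case False
    then have c: "0 \<le> - c" by simp
    have cy: "c *\<^sub>R y = (- c) *\<^sub>R (- y)" by simp
    have "E (c *\<^sub>R y) = S (pprt ((-c) *\<^sub>R (-y))) - S (- nprt ((-c) *\<^sub>R (-y)))"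
      unfolding E_def cy ..
    also have "\<dots> = S ((-c) *\<^sub>R pprt (-y)) - S (- ((-c) *\<^sub>R nprt (-y)))"
      using c by (simp only: pprt_scale nprt_scale)
    also have "\<dots> = S ((-c) *\<^sub>R pprt (-y)) - S ((-c) *\<^sub>R (- nprt (-y)))"
      by (simp only: scaleR_minus_right)
    also have "\<dots> = S ((-c) *\<^sub>R (- nprt y)) - S ((-c) *\<^sub>R pprt y)"
      by (simp only: pprt_neg nprt_neg minus_minus)
    also have "\<dots> = (-c) * S (- nprt y) - (-c) * S (pprt y)"
      using c by (simp only: hom zero_le_pprt neg_0_le_iff_le nprt_le_zero)
    also have "\<dots> = c *\<^sub>R E y" unfolding E_def by (simp add: algebra_simps)
    finally show ?thesis .
  qed
  have Ebnd: "norm (E y) \<le> norm y * K" for y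
  proof -
    have "S (lmod y) = S (pprt y) + S (- nprt y)" unfolding lmod_pn'
      by (rule add) simp_all
    moreover have "0 \<le> S (pprt y)" "0 \<le> S (- nprt y)" by (auto intro: nonneg)
    moreover have "S (lmod y) \<le> K * norm y"
      using bnd[OF lmod_ge0[of y]] by (simp only: norm_lmod)
    ultimately show ?thesis unfolding E_def by (simp add: mult.commute)
  qed
  have bl: "bounded_linear E"
    by (rule bounded_linear_intro[OF Eadd Escale Ebnd])
  define p where "p = Blinfun E"
  have pa: "p y = E y" for y unfolding p_def using bl by (simp add: bounded_linear_Blinfun_apply)
  have pS: "p a = S a" if "0 \<le> a" for a
    using that S0 unfolding pa E_def by simp
  moreover have "posf p" unfolding posf_def using nonneg pS by simp
  ultimately show ?thesis by blast
qed

section \<open>Positive part of a functional\<close>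

definition ppos :: "('a::banach_lattice \<Rightarrow>\<^sub>L real) \<Rightarrow> 'a \<Rightarrow> real" where
  "ppos h x = Sup (blinfun_apply h ` {y. 0 \<le> y \<and> y \<le> x})"

context
  fixes h :: "'a::banach_lattice \<Rightarrow>\<^sub>L real"
begin

lemma ppos_set:
  assumes "0 \<le> x"
  shows "(blinfun_apply h ` {y. 0 \<le> y \<and> y \<le> x}) \<noteq> {}" "bdd_above (blinfun_apply h ` {y. 0 \<le> y \<and> y \<le> x})"
proof -
  have "0 \<in> {y. 0 \<le> y \<and> y \<le> x}" using assms by simp
  then show "(blinfun_apply h ` {y. 0 \<le> y \<and> y \<le> x}) \<noteq> {}" by blast
  have "h y \<le> norm h * norm x" if "0 \<le> y" "y \<le> x" for y
  proof -
    have "h y \<le> norm h * norm y" using norm_blinfun[of h y] by simp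
    also have "\<dots> \<le> norm h * norm x"
      using norm_mono_pos[OF that] by (simp add: mult_left_mono)
    finally show ?thesis .
  qed
  then show "bdd_above (blinfun_apply h ` {y. 0 \<le> y \<and> y \<le> x})"
    by (intro bdd_aboveI[where M = "norm h * norm x"]) auto
qed

lemma ppos_ge: "0 \<le> y \<Longrightarrow> y \<le> x \<Longrightarrow> blinfun_apply h y \<le> ppos h x"
proof -
  assume y: "0 \<le> y" "y \<le> x"
  then have x: "0 \<le> x" by (rule order_trans)
  show ?thesis unfolding ppos_def
    by (rule cSup_upper) (use y ppos_set[OF x] in auto)
qed

lemma ppos_le: "0 \<le> x \<Longrightarrow> (\<And>y. 0 \<le> y \<Longrightarrow> y \<le> x \<Longrightarrow> blinfun_apply h y \<le> B) \<Longrightarrow> ppos h x \<le> B"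
  unfolding ppos_def by (rule cSup_least) (use ppos_set[of x] in auto)

lemma ppos_bnd: "0 \<le> x \<Longrightarrow> ppos h x \<le> norm h * norm x"
proof (rule ppos_le)
  fix y assume "0 \<le> y" "y \<le> x"
  have "h y \<le> norm h * norm y" using norm_blinfun[of h y] by simp
  also have "\<dots> \<le> norm h * norm x"
    using norm_mono_pos[OF \<open>0 \<le> y\<close> \<open>y \<le> x\<close>] by (simp add: mult_left_mono)
  finally show "h y \<le> norm h * norm x" .
qed

lemma ppos_nonneg: "0 \<le> x \<Longrightarrow> 0 \<le> ppos h x"
  using ppos_ge[of 0 x] by simp

lemma ppos_add:
  assumes a: "0 \<le> a" and b: "0 \<le> b"
  shows "ppos h (a + b) = ppos h a + ppos h b"
proof (rule antisym)
  show "ppos h (a + b) \<le> ppos h a + ppos h b"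
  proof (rule ppos_le)
    show "0 \<le> a + b" using a b by simp
    fix y assume "0 \<le> y" "y \<le> a + b"
    then obtain y1 y2 where y: "y = y1 + y2" "0 \<le> y1" "y1 \<le> a" "0 \<le> y2" "y2 \<le> b"
      using riesz_decomp[OF _ _ a b] by blast
    have "h y = h y1 + h y2" unfolding y by (rule blinfun.add_right)
    also have "\<dots> \<le> ppos h a + ppos h b"
      using ppos_ge[OF y(2,3)] ppos_ge[OF y(4,5)] by simp
    finally show "h y \<le> ppos h a + ppos h b" .
  qed
  have "h y1 + h y2 \<le> ppos h (a + b)" if "0 \<le> y1" "y1 \<le> a" "0 \<le> y2" "y2 \<le> b" for y1 y2
  proof -
    have "h y1 + h y2 = h (y1 + y2)" by (simp add: blinfun.add_right)
    also have "\<dots> \<le> ppos h (a + b)"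
      using that by (intro ppos_ge add_nonneg_nonneg add_mono)
    finally show ?thesis .
  qed
  then have "ppos h a \<le> ppos h (a + b) - h y2" if "0 \<le> y2" "y2 \<le> b" for y2
    using that by (intro ppos_le a) (simp add: le_diff_eq)
  then have "h y2 \<le> ppos h (a + b) - ppos h a" if "0 \<le> y2" "y2 \<le> b" for y2
    using that by fastforce
  then have "ppos h b \<le> ppos h (a + b) - ppos h a"
    by (intro ppos_le b)
  then show "ppos h a + ppos h b \<le> ppos h (a + b)" by simp
qed

lemma ppos_zero: "ppos h 0 = 0"
proof (rule antisym)
  show "ppos h 0 \<le> 0" by (rule ppos_le) (auto dest: antisym)
  show "0 \<le> ppos h 0" by (rule ppos_nonneg) simp
qed

lemma ppos_hom:
  assumes c: "0 \<le> c" and a: "0 \<le> a"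
  shows "ppos h (c *\<^sub>R a) = c * ppos h a"
proof (cases "c = 0")
  case True then show ?thesis by (simp add: ppos_zero)
next
  case False
  with c have c: "0 < c" by simp
  have ca: "0 \<le> c *\<^sub>R a" using c a by (simp add: scaleR_nonneg_nonneg)
  show ?thesis
  proof (rule antisym)
    show "ppos h (c *\<^sub>R a) \<le> c * ppos h a"
    proof (rule ppos_le[OF ca])
      fix y assume y: "0 \<le> y" "y \<le> c *\<^sub>R a"
      have "0 \<le> inverse c *\<^sub>R y" using y c by (simp add: scaleR_nonneg_nonneg)
      moreover have "inverse c *\<^sub>R y \<le> inverse c *\<^sub>R (c *\<^sub>R a)"
        using y c by (intro scaleR_left_mono) auto
      ultimately have "h (inverse c *\<^sub>R y) \<le> ppos h a" using c by (intro ppos_ge) auto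
      then have "c * h (inverse c *\<^sub>R y) \<le> c * ppos h a" using c by simp
      moreover have "c * h (inverse c *\<^sub>R y) = h y" using c by (simp add: blinfun.scaleR_right)
      ultimately show "h y \<le> c * ppos h a" by simp
    qed
    have "h y \<le> ppos h (c *\<^sub>R a) / c" if y: "0 \<le> y" "y \<le> a" for y
    proof -
      have "h (c *\<^sub>R y) \<le> ppos h (c *\<^sub>R a)"
        using y c by (intro ppos_ge scaleR_nonneg_nonneg scaleR_left_mono) auto
      then show ?thesis using c by (simp add: blinfun.scaleR_right field_simps)
    qed
    then have "ppos h a \<le> ppos h (c *\<^sub>R a) / c" by (intro ppos_le a)
    then show "c * ppos h a \<le> ppos h (c *\<^sub>R a)" using c by (simp add: field_simps)
  qed
qed

end

definition hplus :: "('a::banach_lattice \<Rightarrow>\<^sub>L real) \<Rightarrow> ('a \<Rightarrow>\<^sub>L real)" where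
  "hplus h = (SOME p. posf p \<and> (\<forall>a. 0 \<le> a \<longrightarrow> p a = ppos h a))"

lemma hplus: "posf (hplus h) \<and> (\<forall>a. 0 \<le> a \<longrightarrow> hplus h a = ppos h a)"
proof -
  have "\<exists>p. posf p \<and> (\<forall>a. 0 \<le> a \<longrightarrow> p a = ppos h a)"
    by (rule cone_ext[where K = "norm h"])
       (auto simp: ppos_add ppos_hom ppos_nonneg ppos_bnd)
  then show ?thesis unfolding hplus_def by (rule someI_ex)
qed

lemma hplus_pos: "posf (hplus h)" using hplus by blast
lemma hplus_eq: "0 \<le> a \<Longrightarrow> hplus h a = ppos h a" using hplus by blast

definition hminus :: "('a::banach_lattice \<Rightarrow>\<^sub>L real) \<Rightarrow> ('a \<Rightarrow>\<^sub>L real)" where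
  "hminus h = hplus h - h"

lemma hminus_pos: "posf (hminus h)"
  unfolding posf_def hminus_def
proof (intro allI impI)
  fix x :: 'a assume x: "0 \<le> x"
  have "h x \<le> ppos h x" by (rule ppos_ge[OF x order_refl])
  then show "0 \<le> (hplus h - h) x" using hplus_eq[OF x, of h] by (simp add: minus_blinfun.rep_eq)
qed

lemma h_split: "h = hplus h - hminus h"
  unfolding hminus_def by simp

definition habs :: "('a::banach_lattice \<Rightarrow>\<^sub>L real) \<Rightarrow> ('a \<Rightarrow>\<^sub>L real)" where
  "habs h = hplus h + hminus h"

lemma habs_pos: "posf (habs h)"
  unfolding habs_def by (intro posf_add hplus_pos hminus_pos)

lemma habs_bnd: "0 \<le> a \<Longrightarrow> habs h a \<le> 3 * norm h * norm a"
proof -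
  assume a: "0 \<le> a"
  have "habs h a = 2 * ppos h a - h a"
    unfolding habs_def hminus_def using a by (simp add: plus_blinfun.rep_eq minus_blinfun.rep_eq hplus_eq)
  moreover have "ppos h a \<le> norm h * norm a" by (rule ppos_bnd[OF a])
  moreover have "- h a \<le> norm h * norm a" using norm_blinfun[of h a] by simp
  ultimately show ?thesis by linarith
qed

section \<open>Carrier components\<close>

definition cS :: "'a::banach_lattice \<Rightarrow> ('a \<Rightarrow>\<^sub>L real) \<Rightarrow> 'a \<Rightarrow> real" where
  "cS u p z = Sup ((\<lambda>t. blinfun_apply p (inf z (t *\<^sub>R u))) ` {0..})"

lemma inf_scale_nonneg: "0 \<le> (z::'a::banach_lattice) \<Longrightarrow> 0 \<le> u \<Longrightarrow> 0 \<le> t \<Longrightarrow> 0 \<le> inf z (t *\<^sub>R u)"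
  by (intro le_infI scaleR_nonneg_nonneg)

context
  fixes u :: "'a::banach_lattice" and p :: "'a \<Rightarrow>\<^sub>L real"
  assumes u: "0 \<le> u" and p: "posf p"
begin

lemma cS_set:
  assumes "0 \<le> z"
  shows "(\<lambda>t. p (inf z (t *\<^sub>R u))) ` {0..} \<noteq> {}"
    "bdd_above ((\<lambda>t. p (inf z (t *\<^sub>R u))) ` {0..})"
proof -
  show "(\<lambda>t. p (inf z (t *\<^sub>R u))) ` {0..} \<noteq> {}" by simp
  have "p (inf z (t *\<^sub>R u)) \<le> p z" for t by (rule posf_mono[OF p]) simp
  then show "bdd_above ((\<lambda>t. p (inf z (t *\<^sub>R u))) ` {0..})"
    by (intro bdd_aboveI[where M = "p z"]) auto
qed

lemma cS_ge: "0 \<le> z \<Longrightarrow> 0 \<le> t \<Longrightarrow> p (inf z (t *\<^sub>R u)) \<le> cS u p z"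
  unfolding cS_def by (rule cSup_upper) (use cS_set[of z] in auto)

lemma cS_le: "0 \<le> z \<Longrightarrow> (\<And>t. 0 \<le> t \<Longrightarrow> p (inf z (t *\<^sub>R u)) \<le> B) \<Longrightarrow> cS u p z \<le> B"
  unfolding cS_def by (rule cSup_least) (use cS_set[of z] in auto)

lemma cS_nonneg: "0 \<le> z \<Longrightarrow> 0 \<le> cS u p z"
proof -
  assume z: "0 \<le> z"
  have "0 \<le> p (inf z (0 *\<^sub>R u))" by (rule posf_nonneg[OF p]) (use z in simp)
  also have "\<dots> \<le> cS u p z" by (rule cS_ge[OF z]) simp
  finally show ?thesis .
qed

lemma cS_le_p: "0 \<le> z \<Longrightarrow> cS u p z \<le> p z"
  by (rule cS_le) (auto intro: posf_mono[OF p])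

lemma cS_id:
  assumes y: "0 \<le> y" "0 \<le> s" "y \<le> s *\<^sub>R u"
  shows "cS u p y = p y"
proof (rule antisym)
  show "cS u p y \<le> p y" by (rule cS_le_p[OF y(1)])
  have "inf y (s *\<^sub>R u) = y" using y(3) by (rule inf_absorb1)
  then show "p y \<le> cS u p y" using cS_ge[OF y(1) y(2)] by simp
qed

lemma cS_mono_t: "0 \<le> t1 \<Longrightarrow> t1 \<le> t2 \<Longrightarrow> p (inf z (t1 *\<^sub>R u)) \<le> p (inf z (t2 *\<^sub>R u))"
  by (intro posf_mono[OF p] inf_scale_mono[OF u])

lemma cS_add:
  assumes a: "0 \<le> a" and b: "0 \<le> b"
  shows "cS u p (a + b) = cS u p a + cS u p b"
proof (rule antisym)
  have ab: "0 \<le> a + b" using a b by simp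
  show "cS u p (a + b) \<le> cS u p a + cS u p b"
  proof (rule cS_le[OF ab])
    fix t :: real assume t: "0 \<le> t"
    have tu: "0 \<le> t *\<^sub>R u" using t u by (rule scaleR_nonneg_nonneg)
    have "p (inf (a + b) (t *\<^sub>R u)) \<le> p (inf a (t *\<^sub>R u) + inf b (t *\<^sub>R u))"
      by (rule posf_mono[OF p], rule inf_add_le[OF a b tu])
    also have "\<dots> = p (inf a (t *\<^sub>R u)) + p (inf b (t *\<^sub>R u))" by (rule blinfun.add_right)
    also have "\<dots> \<le> cS u p a + cS u p b"
      by (intro add_mono cS_ge a b t)
    finally show "p (inf (a + b) (t *\<^sub>R u)) \<le> cS u p a + cS u p b" .
  qed
  have key: "p (inf a (t1 *\<^sub>R u)) + p (inf b (t2 *\<^sub>R u)) \<le> cS u p (a + b)"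
    if t: "0 \<le> t1" "0 \<le> t2" for t1 t2
  proof -
    define T where "T = t1 + t2"
    have T: "0 \<le> T" "t1 \<le> T" "t2 \<le> T" using t unfolding T_def by auto
    have "p (inf a (t1 *\<^sub>R u)) + p (inf b (t2 *\<^sub>R u)) \<le> p (inf a (T *\<^sub>R u)) + p (inf b (T *\<^sub>R u))"
      by (intro add_mono cS_mono_t t T)
    also have "\<dots> = p (inf a (T *\<^sub>R u) + inf b (T *\<^sub>R u))" by (rule blinfun.add_right[symmetric])
    also have "\<dots> \<le> p (inf (a + b) ((2 * T) *\<^sub>R u))"
    proof (rule posf_mono[OF p], rule le_infI)
      show "inf a (T *\<^sub>R u) + inf b (T *\<^sub>R u) \<le> a + b" by (intro add_mono inf_le1)
      have "inf a (T *\<^sub>R u) + inf b (T *\<^sub>R u) \<le> T *\<^sub>R u + T *\<^sub>R u" by (intro add_mono inf_le2)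
      also have "\<dots> = (2 * T) *\<^sub>R u" by (simp add: scaleR_add_left[symmetric])
      finally show "inf a (T *\<^sub>R u) + inf b (T *\<^sub>R u) \<le> (2 * T) *\<^sub>R u" .
    qed
    also have "\<dots> \<le> cS u p (a + b)" using T by (intro cS_ge ab) simp
    finally show ?thesis .
  qed
  have "cS u p a \<le> cS u p (a + b) - p (inf b (t2 *\<^sub>R u))" if "0 \<le> t2" for t2
    using key[OF _ that] by (intro cS_le a) (simp add: le_diff_eq)
  then have "p (inf b (t2 *\<^sub>R u)) \<le> cS u p (a + b) - cS u p a" if "0 \<le> t2" for t2
    using that by fastforce
  then have "cS u p b \<le> cS u p (a + b) - cS u p a" by (intro cS_le b)
  then show "cS u p a + cS u p b \<le> cS u p (a + b)" by simp
qed

lemma cS_zero_arg: "cS u p 0 = 0"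
proof (rule antisym)
  show "cS u p 0 \<le> 0"
  proof (rule cS_le)
    fix t :: real assume "0 \<le> t"
    then have "inf 0 (t *\<^sub>R u) = 0" using u by (simp add: inf_absorb1 scaleR_nonneg_nonneg)
    then show "p (inf 0 (t *\<^sub>R u)) \<le> 0" by simp
  qed simp
  show "0 \<le> cS u p 0" by (rule cS_nonneg) simp
qed

lemma cS_hom:
  assumes c: "0 \<le> c" and a: "0 \<le> a"
  shows "cS u p (c *\<^sub>R a) = c * cS u p a"
proof (cases "c = 0")
  case True then show ?thesis by (simp add: cS_zero_arg)
next
  case False
  with c have c: "0 < c" by simp
  have ca: "0 \<le> c *\<^sub>R a" using c a by (simp add: scaleR_nonneg_nonneg)
  have eq: "inf (c *\<^sub>R a) (t *\<^sub>R u) = c *\<^sub>R inf a ((t / c) *\<^sub>R u)" for t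
    using scaleR_inf[OF c, of a "(t / c) *\<^sub>R u"] c by simp
  show ?thesis
  proof (rule antisym)
    show "cS u p (c *\<^sub>R a) \<le> c * cS u p a"
    proof (rule cS_le[OF ca])
      fix t :: real assume t: "0 \<le> t"
      have "p (inf (c *\<^sub>R a) (t *\<^sub>R u)) = c * p (inf a ((t / c) *\<^sub>R u))"
        unfolding eq by (simp add: blinfun.scaleR_right)
      also have "\<dots> \<le> c * cS u p a"
        using c t by (intro mult_left_mono cS_ge a) auto
      finally show "p (inf (c *\<^sub>R a) (t *\<^sub>R u)) \<le> c * cS u p a" .
    qed
    have "p (inf a (t *\<^sub>R u)) \<le> cS u p (c *\<^sub>R a) / c" if t: "0 \<le> t" for t
    proof -
      have "c * p (inf a (t *\<^sub>R u)) = p (inf (c *\<^sub>R a) ((c * t) *\<^sub>R u))"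
        unfolding eq using c by (simp add: blinfun.scaleR_right)
      also have "\<dots> \<le> cS u p (c *\<^sub>R a)" using c t by (intro cS_ge ca) simp
      finally show ?thesis using c by (simp add: field_simps)
    qed
    then have "cS u p a \<le> cS u p (c *\<^sub>R a) / c" by (intro cS_le a)
    then show "c * cS u p a \<le> cS u p (c *\<^sub>R a)" using c by (simp add: field_simps)
  qed
qed

lemma cS_zero:
  assumes v: "0 \<le> v" "inf u v = 0" and y: "0 \<le> y" "0 \<le> s" "y \<le> s *\<^sub>R v"
  shows "cS u p y = 0"
proof (rule antisym)
  show "cS u p y \<le> 0"
  proof (rule cS_le[OF y(1)])
    fix t :: real assume t: "0 \<le> t"
    have "inf y (t *\<^sub>R u) \<le> inf (t *\<^sub>R u) (s *\<^sub>R v)"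
      using y(3) by (simp add: le_infI1 le_infI2 inf_commute)
    also have "\<dots> = 0" by (rule disj_scale[OF u v(1) v(2) t y(2)])
    finally have "inf y (t *\<^sub>R u) = 0"
      using inf_scale_nonneg[OF y(1) u t] by (rule antisym)
    then show "p (inf y (t *\<^sub>R u)) \<le> 0" by simp
  qed
  show "0 \<le> cS u p y" by (rule cS_nonneg[OF y(1)])
qed

lemma cS_lim:
  assumes z: "0 \<le> z"
  shows "(\<lambda>n. p (inf z (real n *\<^sub>R u))) \<longlonglongrightarrow> cS u p z"
proof (rule LIMSEQ_I)
  fix r :: real assume r: "0 < r"
  have "cS u p z - r < cS u p z" using r by simp
  then obtain t where t: "0 \<le> t" "cS u p z - r < p (inf z (t *\<^sub>R u))"
    unfolding cS_def[of u p z] less_cSup_iff[OF cS_set[OF z]] by auto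
  show "\<exists>no. \<forall>n\<ge>no. norm (p (inf z (real n *\<^sub>R u)) - cS u p z) < r"
  proof (intro exI allI impI)
    fix n assume n: "nat \<lceil>t\<rceil> \<le> n"
    then have "t \<le> real n" by linarith
    then have "p (inf z (t *\<^sub>R u)) \<le> p (inf z (real n *\<^sub>R u))" by (rule cS_mono_t[OF t(1)])
    moreover have "p (inf z (real n *\<^sub>R u)) \<le> cS u p z" by (rule cS_ge[OF z]) simp
    ultimately show "norm (p (inf z (real n *\<^sub>R u)) - cS u p z) < r" using t by simp
  qed
qed

end

lemma cS_add_p:
  assumes "posf p" "posf q" "0 \<le> u" "0 \<le> z"
  shows "cS u (p + q) z = cS u p z + cS u q z"
proof -
  have "(\<lambda>n. (p + q) (inf z (real n *\<^sub>R u))) \<longlonglongrightarrow> cS u (p + q) z"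
    by (rule cS_lim) (use assms posf_add in auto)
  moreover have "(\<lambda>n. (p + q) (inf z (real n *\<^sub>R u))) \<longlonglongrightarrow> cS u p z + cS u q z"
    unfolding plus_blinfun.rep_eq
    by (intro tendsto_add cS_lim) (use assms in auto)
  ultimately show ?thesis by (rule LIMSEQ_unique)
qed

lemma cS_hom_p:
  assumes "posf p" "0 \<le> c" "0 \<le> u" "0 \<le> z"
  shows "cS u (c *\<^sub>R p) z = c * cS u p z"
proof -
  have "(\<lambda>n. (c *\<^sub>R p) (inf z (real n *\<^sub>R u))) \<longlonglongrightarrow> cS u (c *\<^sub>R p) z"
    by (rule cS_lim) (use assms posf_scale in auto)
  moreover have "(\<lambda>n. (c *\<^sub>R p) (inf z (real n *\<^sub>R u))) \<longlonglongrightarrow> c * cS u p z"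
    unfolding blinfun.scaleR_left
    by (simp, intro tendsto_mult_left cS_lim) (use assms in auto)
  ultimately show ?thesis by (rule LIMSEQ_unique)
qed

lemma disj_sum_zero:
  fixes a :: "'a::lattice_ab_group_add"
  assumes "finite F" "0 \<le> a" "\<forall>j\<in>F. 0 \<le> w j \<and> inf a (w j) = 0"
  shows "inf a (\<Sum>j\<in>F. w j) = 0"
  using assms(1,3)
proof (induction F rule: finite_induct)
  case empty then show ?case using assms(2) by (simp add: inf_absorb2)
next
  case (insert k F)
  have wk: "0 \<le> w k" "inf a (w k) = 0" using insert.prems by auto
  have IH: "inf a (sum w F) = 0" using insert.IH insert.prems by auto
  have sF: "0 \<le> sum w F" using insert.prems by (intro sum_nonneg) auto
  have "inf a (w k + sum w F) \<le> inf a (w k) + inf a (sum w F)"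
    using inf_add_le[OF wk(1) sF assms(2)] by (simp add: inf_commute)
  then have "inf a (w k + sum w F) \<le> 0" using wk IH by simp
  moreover have "0 \<le> inf a (w k + sum w F)" using assms(2) wk sF by simp
  ultimately show ?case using insert.hyps by simp
qed

lemma inf_sum_disj:
  fixes z :: "'a::lattice_ab_group_add"
  assumes "finite F" "0 \<le> z" "\<forall>k\<in>F. 0 \<le> w k"
    "\<forall>i\<in>F. \<forall>j\<in>F. i \<noteq> j \<longrightarrow> inf (w i) (w j) = 0"
  shows "(\<Sum>k\<in>F. inf z (w k)) = inf z (\<Sum>k\<in>F. w k)"
  using assms(1,3,4)
proof (induction F rule: finite_induct)
  case empty then show ?case using assms(2) by (simp add: inf_absorb2)
next
  case (insert k F)
  have wk: "0 \<le> w k" using insert.prems by auto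
  have sF: "0 \<le> sum w F" using insert.prems by (intro sum_nonneg) auto
  have d: "inf (w k) (sum w F) = 0"
    using insert.prems insert.hyps by (intro disj_sum_zero wk) auto
  have IH: "(\<Sum>k\<in>F. inf z (w k)) = inf z (sum w F)" using insert.IH insert.prems by auto
  have "(\<Sum>k\<in>insert k F. inf z (w k)) = inf z (w k) + inf z (sum w F)"
    using insert.hyps IH by simp
  also have "\<dots> = inf z (w k + sum w F)"
    by (rule inf_add_disj[OF wk sF d assms(2), symmetric])
  finally show ?case using insert.hyps by simp
qed

lemma cS_sum:
  fixes uu :: "'i \<Rightarrow> 'a::banach_lattice"
  assumes F: "finite F" and uu: "\<forall>k\<in>F. 0 \<le> uu k"
    and d: "\<forall>i\<in>F. \<forall>j\<in>F. i \<noteq> j \<longrightarrow> inf (uu i) (uu j) = 0"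
    and p: "posf p" and z: "0 \<le> z"
  shows "(\<Sum>k\<in>F. cS (uu k) p z) \<le> p z"
proof -
  have lim: "(\<lambda>n. \<Sum>k\<in>F. p (inf z (real n *\<^sub>R uu k))) \<longlonglongrightarrow> (\<Sum>k\<in>F. cS (uu k) p z)"
    by (intro tendsto_sum cS_lim p z) (use uu in auto)
  have "(\<Sum>k\<in>F. p (inf z (real n *\<^sub>R uu k))) \<le> p z" for n
  proof -
    have w: "\<forall>k\<in>F. 0 \<le> real n *\<^sub>R uu k" using uu by (simp add: scaleR_nonneg_nonneg)
    have wd: "\<forall>i\<in>F. \<forall>j\<in>F. i \<noteq> j \<longrightarrow> inf (real n *\<^sub>R uu i) (real n *\<^sub>R uu j) = 0"
      using uu d by (auto intro: disj_scale)
    have "(\<Sum>k\<in>F. p (inf z (real n *\<^sub>R uu k))) = p (\<Sum>k\<in>F. inf z (real n *\<^sub>R uu k))"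
      by (rule blinfun.sum_right[symmetric])
    also have "\<dots> = p (inf z (\<Sum>k\<in>F. real n *\<^sub>R uu k))"
      by (subst inf_sum_disj[OF F z w wd]) (rule refl)
    also have "\<dots> \<le> p z" by (rule posf_mono[OF p]) simp
    finally show ?thesis .
  qed
  then show ?thesis using lim by (intro LIMSEQ_le_const2) auto
qed

definition Pu :: "'a::banach_lattice \<Rightarrow> ('a \<Rightarrow>\<^sub>L real) \<Rightarrow> ('a \<Rightarrow>\<^sub>L real)" where
  "Pu u p = (SOME q. posf q \<and> (\<forall>a. 0 \<le> a \<longrightarrow> q a = cS u p a))"

lemma Pu:
  assumes p: "posf p" and u: "0 \<le> u"
  shows "posf (Pu u p) \<and> (\<forall>a. 0 \<le> a \<longrightarrow> Pu u p a = cS u p a)"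
proof -
  have "\<exists>q. posf q \<and> (\<forall>a. 0 \<le> a \<longrightarrow> q a = cS u p a)"
  proof (rule cone_ext[where K = "norm p"])
    show "cS u p (a + b) = cS u p a + cS u p b" if "0 \<le> a" "0 \<le> b" for a b
      by (rule cS_add[OF u p that])
    show "cS u p (c *\<^sub>R a) = c * cS u p a" if "0 \<le> c" "0 \<le> a" for c a
      by (rule cS_hom[OF u p that])
    show "0 \<le> cS u p a" if "0 \<le> a" for a by (rule cS_nonneg[OF u p that])
    show "cS u p a \<le> norm p * norm a" if "0 \<le> a" for a
    proof -
      have "cS u p a \<le> p a" by (rule cS_le_p[OF u p that])
      also have "\<dots> \<le> norm p * norm a" using norm_blinfun[of p a] by simp
      finally show ?thesis .
    qed
  qed
  then show ?thesis unfolding Pu_def by (rule someI_ex)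
qed

lemma Pu_pos: "posf p \<Longrightarrow> 0 \<le> u \<Longrightarrow> posf (Pu u p)" using Pu by blast
lemma Pu_eq: "posf p \<Longrightarrow> 0 \<le> u \<Longrightarrow> 0 \<le> a \<Longrightarrow> Pu u p a = cS u p a" using Pu by blast

lemma Pu_add: "posf p \<Longrightarrow> posf q \<Longrightarrow> 0 \<le> u \<Longrightarrow> Pu u (p + q) = Pu u p + Pu u q"
  by (rule blinfun_eq_on_pos)
     (simp add: Pu_eq posf_add plus_blinfun.rep_eq cS_add_p)

lemma Pu_scale: "posf p \<Longrightarrow> 0 \<le> c \<Longrightarrow> 0 \<le> u \<Longrightarrow> Pu u (c *\<^sub>R p) = c *\<^sub>R Pu u p"
  by (rule blinfun_eq_on_pos)
     (simp add: Pu_eq posf_scale blinfun.scaleR_left cS_hom_p)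

lemma Pu_abs: "posf p \<Longrightarrow> 0 \<le> u \<Longrightarrow> \<bar>Pu u p y\<bar> \<le> cS u p (lmod y)"
  using posf_abs[OF Pu_pos, of p u y] Pu_eq[OF _ _ lmod_ge0, of p u y] by simp

lemma Pu_id:
  assumes p: "posf p" and y: "lmod y \<le> u"
  shows "Pu u p y = p y"
proof -
  have u: "0 \<le> u" using lmod_ge0[of y] y by (rule order_trans)
  have "pprt y \<le> 1 *\<^sub>R u" using pprt_le_lmod[of y] y by simp
  then have "cS u p (pprt y) = p (pprt y)" by (rule cS_id[OF u p zero_le_pprt, rotated]) simp
  then have a: "Pu u p (pprt y) = p (pprt y)"
    using Pu_eq[OF p u zero_le_pprt] by simp
  have "- nprt y \<le> 1 *\<^sub>R u" using nprt_le_lmod[of y] y by simp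
  then have "cS u p (- nprt y) = p (- nprt y)" by (rule cS_id[OF u p, rotated 2]) simp_all
  then have b: "Pu u p (- nprt y) = p (- nprt y)"
    using Pu_eq[OF p u, of "- nprt y"] by simp
  show ?thesis using a b blinfun_pn[of "Pu u p" y] blinfun_pn[of p y] by simp
qed

definition Qf :: "'a::banach_lattice \<Rightarrow> ('a \<Rightarrow>\<^sub>L real) \<Rightarrow> ('a \<Rightarrow>\<^sub>L real)" where
  "Qf u h = Pu u (hplus h) - Pu u (hminus h)"

lemma Q_repr:
  assumes u: "0 \<le> u" and p: "posf p" and q: "posf q" and h: "h = p - q"
  shows "Qf u h = Pu u p - Pu u q"
proof -
  have "hplus h - hminus h = p - q" using h h_split[of h] by simp
  then have "p + hminus h = hplus h + q" by (simp add: algebra_simps)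
  then have "Pu u (p + hminus h) = Pu u (hplus h + q)" by simp
  then have "Pu u p + Pu u (hminus h) = Pu u (hplus h) + Pu u q"
    by (simp add: Pu_add p q u hplus_pos hminus_pos)
  then show ?thesis unfolding Qf_def by (simp add: algebra_simps)
qed

lemma Q_add: "0 \<le> u \<Longrightarrow> Qf u (h1 + h2) = Qf u h1 + Qf u h2"
proof -
  assume u: "0 \<le> u"
  have "h1 + h2 = (hplus h1 + hplus h2) - (hminus h1 + hminus h2)"
    using h_split[of h1] h_split[of h2] by (simp add: algebra_simps)
  then have "Qf u (h1 + h2) = Pu u (hplus h1 + hplus h2) - Pu u (hminus h1 + hminus h2)"
    by (intro Q_repr u posf_add hplus_pos hminus_pos)
  also have "\<dots> = Qf u h1 + Qf u h2"
    unfolding Qf_def by (simp add: Pu_add u hplus_pos hminus_pos algebra_simps)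
  finally show ?thesis .
qed

lemma Q_scale: "0 \<le> u \<Longrightarrow> Qf u (c *\<^sub>R h) = c *\<^sub>R Qf u h"
proof -
  assume u: "0 \<le> u"
  show ?thesis
  proof (cases "0 \<le> c")
    case True
    have "c *\<^sub>R h = c *\<^sub>R hplus h - c *\<^sub>R hminus h"
      using h_split[of h] by (metis scaleR_diff_right)
    then have "Qf u (c *\<^sub>R h) = Pu u (c *\<^sub>R hplus h) - Pu u (c *\<^sub>R hminus h)"
      by (intro Q_repr u posf_scale hplus_pos hminus_pos True)
    also have "\<dots> = c *\<^sub>R Qf u h"
      unfolding Qf_def by (simp add: Pu_scale u hplus_pos hminus_pos True scaleR_diff_right)
    finally show ?thesis .
  next
    case False
    then have c: "0 \<le> - c" by simp
    have e: "hminus h - hplus h = - h" using h_split[of h] by (metis minus_diff_eq)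
    have "(- c) *\<^sub>R hminus h - (- c) *\<^sub>R hplus h = (- c) *\<^sub>R (hminus h - hplus h)"
      by (simp only: scaleR_diff_right)
    then have "c *\<^sub>R h = (- c) *\<^sub>R hminus h - (- c) *\<^sub>R hplus h"
      unfolding e by simp
    then have "Qf u (c *\<^sub>R h) = Pu u ((- c) *\<^sub>R hminus h) - Pu u ((- c) *\<^sub>R hplus h)"
      by (intro Q_repr u posf_scale hplus_pos hminus_pos c)
    also have "\<dots> = (- c) *\<^sub>R Pu u (hminus h) - (- c) *\<^sub>R Pu u (hplus h)"
      by (simp only: Pu_scale[OF hminus_pos c u] Pu_scale[OF hplus_pos c u])
    also have "\<dots> = c *\<^sub>R Qf u h"
      unfolding Qf_def by (simp add: algebra_simps)
    finally show ?thesis .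
  qed
qed

lemma Q_abs: "0 \<le> u \<Longrightarrow> \<bar>Qf u h y\<bar> \<le> cS u (habs h) (lmod y)"
proof -
  assume u: "0 \<le> u"
  have "\<bar>Qf u h y\<bar> \<le> \<bar>Pu u (hplus h) y\<bar> + \<bar>Pu u (hminus h) y\<bar>"
    unfolding Qf_def minus_blinfun.rep_eq by simp
  also have "\<dots> \<le> cS u (hplus h) (lmod y) + cS u (hminus h) (lmod y)"
    by (intro add_mono Pu_abs u hplus_pos hminus_pos)
  also have "\<dots> = cS u (habs h) (lmod y)"
    unfolding habs_def by (rule cS_add_p[symmetric]) (auto intro: hplus_pos hminus_pos u lmod_ge0)
  finally show ?thesis .
qed

lemma Q_norm: "0 \<le> u \<Longrightarrow> norm (Qf u h) \<le> norm h * 3"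
proof -
  assume u: "0 \<le> u"
  have "norm (Qf u h y) \<le> (3 * norm h) * norm y" for y
  proof -
    have "norm (Qf u h y) \<le> cS u (habs h) (lmod y)" using Q_abs[OF u] by simp
    also have "\<dots> \<le> habs h (lmod y)" by (rule cS_le_p[OF u habs_pos lmod_ge0])
    also have "\<dots> \<le> 3 * norm h * norm (lmod y)" by (rule habs_bnd[OF lmod_ge0])
    finally show ?thesis by (simp add: norm_lmod)
  qed
  then have "norm (Qf u h) \<le> 3 * norm h" by (intro norm_blinfun_bound) auto
  then show ?thesis by simp
qed

lemma Q_bl: "0 \<le> u \<Longrightarrow> bounded_linear (Qf u)"
  by (rule bounded_linear_intro[where K = 3]) (auto simp: Q_add Q_scale Q_norm)

definition Qb :: "'a::banach_lattice \<Rightarrow> ('a \<Rightarrow>\<^sub>L real) \<Rightarrow>\<^sub>L ('a \<Rightarrow>\<^sub>L real)" where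
  "Qb u = Blinfun (Qf u)"

lemma Qb_apply: "0 \<le> u \<Longrightarrow> blinfun_apply (Qb u) h = Qf u h"
  unfolding Qb_def by (simp add: bounded_linear_Blinfun_apply Q_bl)

lemma Q_id: "lmod y \<le> u \<Longrightarrow> Qf u h y = h y"
proof -
  assume y: "lmod y \<le> u"
  have "Qf u h y = hplus h y - hminus h y"
    unfolding Qf_def minus_blinfun.rep_eq using Pu_id[OF hplus_pos y] Pu_id[OF hminus_pos y] by simp
  also have "\<dots> = h y" unfolding hminus_def minus_blinfun.rep_eq by simp
  finally show ?thesis .
qed

lemma dual_abs_img:
  "{\<bar>blinfun_apply f y\<bar> | y. lmod y \<le> x} = (\<lambda>y. \<bar>f y\<bar>) ` {y. lmod y \<le> x}"
  by auto

lemma dual_abs_set: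
  fixes f :: "'a::banach_lattice \<Rightarrow>\<^sub>L real"
  assumes x: "0 \<le> x"
  shows "(\<lambda>y. \<bar>f y\<bar>) ` {y. lmod y \<le> x} \<noteq> {}" "bdd_above ((\<lambda>y. \<bar>f y\<bar>) ` {y. lmod y \<le> x})"
proof -
  have "lmod (0::'a) = 0" by (simp add: lmod_pos)
  then have "(0::'a) \<in> {y. lmod y \<le> x}" using x by simp
  then show "(\<lambda>y. \<bar>f y\<bar>) ` {y. lmod y \<le> x} \<noteq> {}" by blast
  have "\<bar>f y\<bar> \<le> norm f * norm x" if "lmod y \<le> x" for y
  proof -
    have "\<bar>f y\<bar> \<le> norm f * norm y" using norm_blinfun[of f y] by simp
    also have "\<dots> \<le> norm f * norm x" using norm_le_lmod[OF that] by (simp add: mult_left_mono)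
    finally show ?thesis .
  qed
  then show "bdd_above ((\<lambda>y. \<bar>f y\<bar>) ` {y. lmod y \<le> x})"
    by (intro bdd_aboveI[where M = "norm f * norm x"]) auto
qed

lemma dual_abs_nonneg:
  fixes f :: "'a::banach_lattice \<Rightarrow>\<^sub>L real"
  assumes x: "0 \<le> x"
  shows "0 \<le> dual_abs f x"
proof -
  have "lmod (0::'a) = 0" by (simp add: lmod_pos)
  then have "\<bar>f 0\<bar> \<in> (\<lambda>y. \<bar>f y\<bar>) ` {y. lmod y \<le> x}" using x
    by (intro image_eqI[where x=0]) auto
  then have "\<bar>f 0\<bar> \<le> dual_abs f x"
    unfolding dual_abs_def dual_abs_img by (rule cSup_upper) (rule dual_abs_set[OF x])
  then show ?thesis by simp
qed

lemma dual_abs_le: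
  fixes f :: "'a::banach_lattice \<Rightarrow>\<^sub>L real"
  assumes x: "0 \<le> x" and b: "\<And>y. lmod y \<le> x \<Longrightarrow> \<bar>f y\<bar> \<le> B"
  shows "dual_abs f x \<le> B"
  unfolding dual_abs_def dual_abs_img
  by (rule cSup_least) (use dual_abs_set[OF x, of f] b in auto)

lemma cS_mono:
  assumes u: "0 \<le> u" and p: "posf p" and a: "0 \<le> a" and ab: "a \<le> b"
  shows "cS u p a \<le> cS u p b"
proof -
  have d: "0 \<le> b - a" using ab by simp
  have "cS u p b = cS u p (a + (b - a))" by simp
  also have "\<dots> = cS u p a + cS u p (b - a)" by (rule cS_add[OF u p a d])
  finally show ?thesis using cS_nonneg[OF u p d] by simp
qed

lemma dual_abs_Q:
  assumes u: "0 \<le> u" and x: "0 \<le> x"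
  shows "dual_abs (Qf u h) x \<le> cS u (habs h) x"
proof (rule dual_abs_le[OF x])
  fix y assume y: "lmod y \<le> x"
  have "\<bar>Qf u h y\<bar> \<le> cS u (habs h) (lmod y)" by (rule Q_abs[OF u])
  also have "\<dots> \<le> cS u (habs h) x" by (rule cS_mono[OF u habs_pos lmod_ge0 y])
  finally show "\<bar>Qf u h y\<bar> \<le> cS u (habs h) x" .
qed

lemma Q_disjoint:
  fixes u v :: "'a::banach_lattice"
  assumes u: "0 \<le> u" and v: "0 \<le> v" and uv: "inf u v = 0"
  shows "disjoint_dual (Qf u h) (Qf v h')"
  unfolding disjoint_dual_def
proof (intro allI impI)
  fix x :: 'a assume x: "0 \<le> x"
  define T where "T = {dual_abs (Qf u h) y + dual_abs (Qf v h') (x - y) | y. 0 \<le> y \<and> y \<le> x}"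
  have Timg: "T = (\<lambda>y. dual_abs (Qf u h) y + dual_abs (Qf v h') (x - y)) ` {y. 0 \<le> y \<and> y \<le> x}"
    unfolding T_def by auto
  have Tne: "T \<noteq> {}" unfolding Timg using x by auto
  have Tge: "0 \<le> s" if "s \<in> T" for s
  proof -
    from that obtain y where y: "0 \<le> y" "y \<le> x" "s = dual_abs (Qf u h) y + dual_abs (Qf v h') (x - y)"
      unfolding Timg by auto
    have "0 \<le> x - y" using y by simp
    then show ?thesis using y dual_abs_nonneg[OF y(1)] dual_abs_nonneg[of "x - y"] by simp
  qed
  have Tb: "bdd_below T" using Tge by (intro bdd_belowI[where m = 0]) auto
  have I0: "0 \<le> Inf T" using Tne Tge by (intro cInf_greatest) auto
  have "Inf T \<le> 0 + e" if e: "0 < e" for e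
  proof -
    define A where "A = habs h"
    have A: "posf A" unfolding A_def by (rule habs_pos)
    have "cS u A x - e < cS u A x" using e by simp
    then obtain t where t: "0 \<le> t" "cS u A x - e < A (inf x (t *\<^sub>R u))"
      unfolding cS_def[of u A x] less_cSup_iff[OF cS_set[OF u A x]] by auto
    define w where "w = inf x (t *\<^sub>R u)"
    have w: "0 \<le> w" "w \<le> x" "w \<le> t *\<^sub>R u"
      unfolding w_def using inf_scale_nonneg[OF x u t(1)] by auto
    define y where "y = x - w"
    have y: "0 \<le> y" "y \<le> x" "x - y = w" "x = y + w" unfolding y_def using w by auto
    have "cS u A x = cS u A y + cS u A w" unfolding y(4) by (rule cS_add[OF u A y(1) w(1)])
    moreover have "cS u A w = A w" by (rule cS_id[OF u A w(1) t(1) w(3)])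
    ultimately have s1: "cS u A y < e" using t(2) unfolding w_def by simp
    have "dual_abs (Qf u h) y \<le> cS u A y" unfolding A_def by (rule dual_abs_Q[OF u y(1)])
    moreover have "dual_abs (Qf v h') w \<le> cS v (habs h') w" by (rule dual_abs_Q[OF v w(1)])
    moreover have "cS v (habs h') w = 0"
      by (rule cS_zero[OF v habs_pos u _ w(1) t(1) w(3)]) (simp add: inf_commute uv)
    ultimately have "dual_abs (Qf u h) y + dual_abs (Qf v h') (x - y) < e"
      using s1 y(3) by simp
    moreover have "dual_abs (Qf u h) y + dual_abs (Qf v h') (x - y) \<in> T"
      unfolding Timg using y(1,2) by (intro image_eqI[where x=y]) auto
    ultimately have "Inf T < e" using cInf_lower[OF _ Tb] by fastforce
    then show ?thesis by simp
  qed
  then have "Inf T \<le> 0" by (rule field_le_epsilon)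
  with I0 have "Inf T = 0" by simp
  then show "Inf {dual_abs (Qf u h) y + dual_abs (Qf v h') (x - y) | y. 0 \<le> y \<and> y \<le> x} = 0"
    unfolding T_def .
qed

section \<open>A diagonal Schur-type lemma (gliding hump)\<close>

lemma tendsto0_ev:
  fixes g :: "nat \<Rightarrow> real"
  assumes "g \<longlonglongrightarrow> 0" "0 < r"
  shows "eventually (\<lambda>n. \<bar>g n\<bar> \<le> r) sequentially"
proof -
  have "eventually (\<lambda>n. dist (g n) 0 < r) sequentially" by (rule tendstoD[OF assms])
  then show ?thesis by eventually_elim simp
qed

lemma schur_diag:
  fixes \<psi> :: "nat \<Rightarrow> ('v::real_normed_vector \<Rightarrow>\<^sub>L real)" and hh :: "nat \<Rightarrow> 'v"
  assumes sumb: "\<And>F v. finite F \<Longrightarrow> (\<Sum>k\<in>F. \<bar>\<psi> k v\<bar>) \<le> C * norm v"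
    and wn: "\<And>\<Phi>::'v \<Rightarrow>\<^sub>L real. (\<lambda>k. \<Phi> (hh k)) \<longlonglongrightarrow> 0"
  shows "(\<lambda>k. \<psi> k (hh k)) \<longlonglongrightarrow> 0"
proof (rule ccontr)
  assume nt: "\<not> (\<lambda>k. \<psi> k (hh k)) \<longlonglongrightarrow> 0"
  obtain \<delta> where \<delta>: "0 < \<delta>" "\<And>N. \<exists>n\<ge>N. \<delta> \<le> \<bar>\<psi> n (hh n)\<bar>"
  proof -
    from nt obtain r where r: "0 < r" "\<not> (\<exists>no. \<forall>n\<ge>no. norm (\<psi> n (hh n) - 0) < r)"
      unfolding LIMSEQ_iff by blast
    have "\<exists>n\<ge>N. r \<le> \<bar>\<psi> n (hh n)\<bar>" for N using r(2) by (auto simp: not_less)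
    then show thesis using that[of r] r(1) by blast
  qed
  define \<eta> where "\<eta> = \<delta> / 4"
  have \<eta>: "0 < \<eta>" unfolding \<eta>_def using \<delta> by simp
  have lim1: "(\<lambda>k. \<psi> k v) \<longlonglongrightarrow> 0" for v
  proof -
    have "summable (\<lambda>k. \<bar>\<psi> k v\<bar>)"
      by (rule summableI_nonneg_bounded[where x = "C * norm v"]) (auto intro: sumb)
    then have "(\<lambda>k. \<bar>\<psi> k v\<bar>) \<longlonglongrightarrow> 0" by (rule summable_LIMSEQ_zero)
    then show ?thesis by (simp add: tendsto_rabs_zero_iff)
  qed
  have step: "\<exists>y. \<delta> \<le> \<bar>\<psi> y (hh y)\<bar> \<and> (x < y \<and> (\<forall>m\<le>x. \<bar>\<psi> m (hh y)\<bar> \<le> \<eta> / 2^(m+1))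
      \<and> (\<forall>m\<le>x. \<bar>\<psi> y (hh m)\<bar> \<le> \<eta> / 2^(n+2)))" for x n
  proof -
    have e1: "eventually (\<lambda>y. \<forall>m\<in>{..x}. \<bar>\<psi> m (hh y)\<bar> \<le> \<eta> / 2^(m+1)) sequentially"
      by (rule eventually_ball_finite[OF finite_atMost]) (auto intro!: tendsto0_ev wn simp: \<eta>)
    have e2: "eventually (\<lambda>y. \<forall>m\<in>{..x}. \<bar>\<psi> y (hh m)\<bar> \<le> \<eta> / 2^(n+2)) sequentially"
      by (rule eventually_ball_finite[OF finite_atMost]) (auto intro!: tendsto0_ev lim1 simp: \<eta>)
    have e3: "eventually (\<lambda>y. x < y) sequentially" by (rule eventually_gt_at_top)
    have "eventually (\<lambda>y. x < y \<and> (\<forall>m\<in>{..x}. \<bar>\<psi> m (hh y)\<bar> \<le> \<eta> / 2^(m+1))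
      \<and> (\<forall>m\<in>{..x}. \<bar>\<psi> y (hh m)\<bar> \<le> \<eta> / 2^(n+2))) sequentially"
      using e1 e2 e3 by eventually_elim auto
    then obtain N where N: "\<And>y. N \<le> y \<Longrightarrow> x < y \<and> (\<forall>m\<in>{..x}. \<bar>\<psi> m (hh y)\<bar> \<le> \<eta> / 2^(m+1))
      \<and> (\<forall>m\<in>{..x}. \<bar>\<psi> y (hh m)\<bar> \<le> \<eta> / 2^(n+2))"
      unfolding eventually_sequentially by blast
    obtain y where "N \<le> y" "\<delta> \<le> \<bar>\<psi> y (hh y)\<bar>" using \<delta>(2) by blast
    then show ?thesis using N[of y] by auto
  qed
  have "\<exists>f. \<forall>n. \<delta> \<le> \<bar>\<psi> (f n) (hh (f n))\<bar> \<and> (f n < f (Suc n)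
      \<and> (\<forall>m\<le>f n. \<bar>\<psi> m (hh (f (Suc n)))\<bar> \<le> \<eta> / 2^(m+1))
      \<and> (\<forall>m\<le>f n. \<bar>\<psi> (f (Suc n)) (hh m)\<bar> \<le> \<eta> / 2^(n+2)))"
  proof (rule dependent_nat_choice[where P = "\<lambda>n x. \<delta> \<le> \<bar>\<psi> x (hh x)\<bar>"])
    show "\<exists>x. \<delta> \<le> \<bar>\<psi> x (hh x)\<bar>" using \<delta>(2)[of 0] by blast
  next
    fix x n assume "\<delta> \<le> \<bar>\<psi> x (hh x)\<bar>"
    show "\<exists>y. \<delta> \<le> \<bar>\<psi> y (hh y)\<bar> \<and> (x < y
      \<and> (\<forall>m\<le>x. \<bar>\<psi> m (hh y)\<bar> \<le> \<eta> / 2^(m+1))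
      \<and> (\<forall>m\<le>x. \<bar>\<psi> y (hh m)\<bar> \<le> \<eta> / 2^(n+2)))" by (rule step)
  qed
  then obtain f where f: "\<And>n. \<delta> \<le> \<bar>\<psi> (f n) (hh (f n))\<bar>" "\<And>n. f n < f (Suc n)"
    "\<And>n m. m \<le> f n \<Longrightarrow> \<bar>\<psi> m (hh (f (Suc n)))\<bar> \<le> \<eta> / 2^(m+1)"
    "\<And>n m. m \<le> f n \<Longrightarrow> \<bar>\<psi> (f (Suc n)) (hh m)\<bar> \<le> \<eta> / 2^(n+2)"
    by blast
  have sm: "strict_mono f" using f(2) by (simp add: strict_mono_Suc_iff)
  have fge: "n \<le> f n" for n using seq_suble[OF sm] .
  have cross: "\<bar>\<psi> (f i) (hh (f j))\<bar> \<le> (\<eta> / 2) * (1/2)^i" if ij: "i \<noteq> j" for i j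
  proof (cases "i < j")
    case True
    then obtain j' where j': "j = Suc j'" "i \<le> j'" by (cases j) auto
    have "f i \<le> f j'" using j'(2) sm by (simp add: strict_mono_less_eq)
    then have "\<bar>\<psi> (f i) (hh (f j))\<bar> \<le> \<eta> / 2^(f i + 1)" unfolding j'(1) by (rule f(3))
    also have "\<dots> \<le> \<eta> / 2^(i + 1)"
      using \<eta> fge[of i] by (intro divide_left_mono power_increasing) auto
    also have "\<dots> = (\<eta> / 2) * (1/2)^i" by (simp add: power_divide field_simps)
    finally show ?thesis .
  next
    case False
    with ij have "j < i" by simp
    then obtain i' where i': "i = Suc i'" "j \<le> i'" by (cases i) auto
    have "f j \<le> f i'" using i'(2) sm by (simp add: strict_mono_less_eq)
    then have "\<bar>\<psi> (f i) (hh (f j))\<bar> \<le> \<eta> / 2^(i' + 2)" unfolding i'(1) by (rule f(4))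
    also have "\<dots> = (\<eta> / 2) * (1/2)^i" unfolding i'(1) by (simp add: power_divide field_simps)
    finally show ?thesis .
  qed
  define sg where "sg i = sgn (\<psi> (f i) (hh (f i)))" for i
  have sgb: "\<bar>sg i * a\<bar> \<le> \<bar>a\<bar>" for i a
    unfolding sg_def by (simp add: abs_mult abs_sgn_eq mult_le_cancel_right1 split: if_splits)
  have inj: "inj f" using sm by (rule strict_mono_imp_inj_on)
  have psum: "(\<Sum>i<n. \<bar>\<psi> (f i) v\<bar>) \<le> C * norm v" for n v
  proof -
    have "(\<Sum>i<n. \<bar>\<psi> (f i) v\<bar>) = (\<Sum>k\<in>f ` {..<n}. \<bar>\<psi> k v\<bar>)"
      using inj by (simp add: sum.reindex inj_on_subset)
    also have "\<dots> \<le> C * norm v" by (rule sumb) simp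
    finally show ?thesis .
  qed
  have absum: "summable (\<lambda>i. \<bar>\<psi> (f i) v\<bar>)" for v
    by (rule summableI_nonneg_bounded[where x = "C * norm v"]) (auto intro: psum)
  have summ: "summable (\<lambda>i. sg i * \<psi> (f i) v)" for v
    by (rule summable_comparison_test'[OF absum[of v], where N = 0]) (simp add: sgb)
  have summa: "summable (\<lambda>i. \<bar>sg i * \<psi> (f i) v\<bar>)" for v
    by (rule summable_comparison_test'[OF absum[of v], where N = 0]) (simp add: sgb)
  define \<Phi>0 where "\<Phi>0 v = (\<Sum>i. sg i * \<psi> (f i) v)" for v
  have \<Phi>bl: "bounded_linear \<Phi>0"
  proof (rule bounded_linear_intro[where K = C])
    show "\<Phi>0 (v + w) = \<Phi>0 v + \<Phi>0 w" for v w
      unfolding \<Phi>0_def by (simp add: blinfun.add_right distrib_left suminf_add[OF summ summ])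
    show "\<Phi>0 (r *\<^sub>R v) = r *\<^sub>R \<Phi>0 v" for r v
    proof -
      have "\<Phi>0 (r *\<^sub>R v) = (\<Sum>i. r * (sg i * \<psi> (f i) v))"
        unfolding \<Phi>0_def by (simp add: blinfun.scaleR_right algebra_simps)
      also have "\<dots> = r * \<Phi>0 v" unfolding \<Phi>0_def by (rule suminf_mult[OF summ])
      finally show ?thesis by simp
    qed
    show "norm (\<Phi>0 v) \<le> norm v * C" for v
    proof -
      have "\<bar>\<Phi>0 v\<bar> \<le> (\<Sum>i. \<bar>sg i * \<psi> (f i) v\<bar>)" unfolding \<Phi>0_def by (rule summable_rabs[OF summa])
      also have "\<dots> \<le> (\<Sum>i. \<bar>\<psi> (f i) v\<bar>)" by (rule suminf_le[OF sgb summa absum])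
      also have "\<dots> \<le> C * norm v" by (rule suminf_le_const[OF absum psum])
      finally show ?thesis by (simp add: mult.commute)
    qed
  qed
  define \<Phi> where "\<Phi> = Blinfun \<Phi>0"
  have \<Phi>a: "\<Phi> v = \<Phi>0 v" for v unfolding \<Phi>_def using \<Phi>bl by (simp add: bounded_linear_Blinfun_apply)
  have "(\<lambda>k. \<Phi> (hh k)) \<longlonglongrightarrow> 0" by (rule wn)
  from LIMSEQ_subseq_LIMSEQ[OF this sm] have lim: "(\<lambda>j. \<Phi>0 (hh (f j))) \<longlonglongrightarrow> 0"
    by (simp add: o_def \<Phi>a)
  have low: "3 * \<delta> / 4 \<le> \<bar>\<Phi>0 (hh (f j))\<bar>" for j
  proof -
    define a where "a i = sg i * \<psi> (f i) (hh (f j))" for i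
    define a' where "a' i = (if i = j then 0 else a i)" for i
    have aj: "a j = \<bar>\<psi> (f j) (hh (f j))\<bar>" unfolding a_def sg_def by (simp add: sgn_mult_abs abs_sgn mult.commute)
    have sa: "summable a" unfolding a_def by (rule summ)
    have sa': "summable a'"
      by (rule summable_comparison_test'[OF summa[of "hh (f j)"], where N = 0]) (simp add: a'_def a_def)
    have "(\<lambda>i. a' i + (if i = j then a i else 0)) sums (suminf a' + a j)"
      by (intro sums_add summable_sums[OF sa'] sums_single)
    moreover have "(\<lambda>i. a' i + (if i = j then a i else 0)) = a" by (auto simp: a'_def)
    ultimately have "suminf a = suminf a' + a j" by (simp add: sums_iff)
    moreover have "\<bar>suminf a'\<bar> \<le> \<eta>"
    proof -
      have g: "summable (\<lambda>i. (\<eta> / 2) * (1/2::real)^i)"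
        by (intro summable_mult summable_geometric) simp
      have b: "\<bar>a' i\<bar> \<le> (\<eta> / 2) * (1/2)^i" for i
      proof (cases "i = j")
        case True then show ?thesis using \<eta> by (simp add: a'_def)
      next
        case False
        have "\<bar>a' i\<bar> \<le> \<bar>\<psi> (f i) (hh (f j))\<bar>" using False by (simp add: a'_def a_def sgb)
        also have "\<dots> \<le> (\<eta> / 2) * (1/2)^i" by (rule cross[OF False])
        finally show ?thesis .
      qed
      have sabs: "summable (\<lambda>i. \<bar>a' i\<bar>)"
        by (rule summable_comparison_test'[OF g, where N = 0]) (simp only: real_norm_def abs_abs b)
      have "\<bar>suminf a'\<bar> \<le> (\<Sum>i. \<bar>a' i\<bar>)" by (rule summable_rabs[OF sabs])
      also have "\<dots> \<le> (\<Sum>i. (\<eta> / 2) * (1/2::real)^i)" by (rule suminf_le[OF b sabs g])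
      also have "\<dots> = (\<eta> / 2) * 2"
        by (subst suminf_mult[OF summable_geometric]) (simp_all add: suminf_geometric)
      finally show ?thesis by simp
    qed
    moreover have "\<Phi>0 (hh (f j)) = suminf a" unfolding \<Phi>0_def a_def ..
    ultimately show ?thesis using aj f(1)[of j] unfolding \<eta>_def by linarith
  qed
  have "eventually (\<lambda>j. \<bar>\<Phi>0 (hh (f j))\<bar> \<le> \<delta> / 2) sequentially"
    by (rule tendsto0_ev[OF lim]) (simp add: \<delta>)
  then obtain j where "\<bar>\<Phi>0 (hh (f j))\<bar> \<le> \<delta> / 2" by (auto simp: eventually_sequentially)
  with low[of j] \<delta> show False by simp
qed

lemma Q_sum_bound:
  fixes uu :: "nat \<Rightarrow> 'a::banach_lattice" and \<phi> :: "('a \<Rightarrow>\<^sub>L real) \<Rightarrow>\<^sub>L real"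
  assumes u0: "\<And>k. 0 \<le> uu k" and ud: "\<And>i j. i \<noteq> j \<Longrightarrow> inf (uu i) (uu j) = 0"
    and F: "finite F"
  shows "(\<Sum>k\<in>F. \<bar>\<phi> (Qf (uu k) v)\<bar>) \<le> norm \<phi> * 3 * norm v"
proof -
  define G where "G = (\<Sum>k\<in>F. sgn (\<phi> (Qf (uu k) v)) *\<^sub>R Qf (uu k) v)"
  have "\<phi> G = (\<Sum>k\<in>F. sgn (\<phi> (Qf (uu k) v)) * \<phi> (Qf (uu k) v))"
    unfolding G_def by (simp add: blinfun.sum_right blinfun.scaleR_right)
  also have "\<dots> = (\<Sum>k\<in>F. \<bar>\<phi> (Qf (uu k) v)\<bar>)"
    by (rule sum.cong) (simp_all add: abs_sgn mult.commute)
  finally have phiG: "\<phi> G = (\<Sum>k\<in>F. \<bar>\<phi> (Qf (uu k) v)\<bar>)" .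
  have "norm (G y) \<le> (3 * norm v) * norm y" for y
  proof -
    have "G y = (\<Sum>k\<in>F. sgn (\<phi> (Qf (uu k) v)) * Qf (uu k) v y)"
      unfolding G_def by (simp add: blinfun.sum_left blinfun.scaleR_left)
    then have "\<bar>G y\<bar> \<le> (\<Sum>k\<in>F. \<bar>sgn (\<phi> (Qf (uu k) v)) * Qf (uu k) v y\<bar>)"
      by (simp only: sum_abs)
    also have "\<dots> \<le> (\<Sum>k\<in>F. cS (uu k) (habs v) (lmod y))"
    proof (rule sum_mono)
      fix k assume "k \<in> F"
      have "\<bar>sgn (\<phi> (Qf (uu k) v)) * Qf (uu k) v y\<bar> \<le> \<bar>Qf (uu k) v y\<bar>"
        by (simp add: abs_mult abs_sgn_eq mult_le_cancel_right1)
      also have "\<dots> \<le> cS (uu k) (habs v) (lmod y)" by (rule Q_abs[OF u0])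
      finally show "\<bar>sgn (\<phi> (Qf (uu k) v)) * Qf (uu k) v y\<bar> \<le> cS (uu k) (habs v) (lmod y)" .
    qed
    also have "\<dots> \<le> habs v (lmod y)"
      by (rule cS_sum[OF F]) (auto intro: u0 ud habs_pos lmod_ge0)
    also have "\<dots> \<le> 3 * norm v * norm (lmod y)" by (rule habs_bnd[OF lmod_ge0])
    finally show ?thesis by (simp add: norm_lmod)
  qed
  then have nG: "norm G \<le> 3 * norm v" by (intro norm_blinfun_bound) auto
  have "\<phi> G \<le> norm \<phi> * norm G" using norm_blinfun[of \<phi> G] by simp
  also have "\<dots> \<le> norm \<phi> * (3 * norm v)" by (intro mult_left_mono nG) simp
  finally show ?thesis using phiG by simp
qed

theorem mainTheorem17:
  fixes x :: "nat \<Rightarrow> 'a::banach_lattice"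
  assumes "\<forall>i j. i \<noteq> j \<longrightarrow> disjoint_elems (x i) (x j)"
    and "almost_DP_set (range x)"
  shows "DP_set (range x)"
  unfolding DP_set_def
proof (intro conjI allI impI)
  note dj = assms(1) and adp = assms(2)
  show "bounded (range x)" using adp unfolding almost_DP_set_def by blast
  fix f :: "nat \<Rightarrow> ('a \<Rightarrow>\<^sub>L real)" assume wn: "weakly_null_dual f"
  show "unif_null_on f (range x)"
  proof (rule ccontr)
    assume "\<not> unif_null_on f (range x)"
    then obtain e where e: "0 < e" "\<not> eventually (\<lambda>n. \<forall>z\<in>range x. \<bar>f n z\<bar> < e) sequentially"
      unfolding unif_null_on_def by blast
    have bad: "\<exists>n\<ge>N. \<exists>m. e \<le> \<bar>f n (x m)\<bar>" for N
      using e(2) unfolding eventually_sequentially by (auto simp: not_less)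
    have col: "(\<lambda>n. f n (x m)) \<longlonglongrightarrow> 0" for m
    proof -
      have eq: "blinfun_apply (Blinfun (\<lambda>g. blinfun_apply g (x m))) = (\<lambda>g. g (x m))"
        by (rule bounded_linear_Blinfun_apply) (rule blinfun.bounded_linear_left)
      have "(\<lambda>n. blinfun_apply (Blinfun (\<lambda>g. blinfun_apply g (x m))) (f n)) \<longlonglongrightarrow> 0"
        using wn unfolding weakly_null_dual_def by blast
      then show ?thesis unfolding eq .
    qed
    have step: "\<exists>q. e \<le> \<bar>f (fst q) (x (snd q))\<bar> \<and> (fst p < fst q \<and> snd p < snd q)"
      for p :: "nat \<times> nat"
    proof -
      have "eventually (\<lambda>n. \<forall>m\<in>{..snd p}. \<bar>f n (x m)\<bar> < e) sequentially"
      proof (rule eventually_ball_finite[OF finite_atMost], intro ballI)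
        fix m
        have "eventually (\<lambda>n. dist (f n (x m)) 0 < e) sequentially" by (rule tendstoD[OF col e(1)])
        then show "eventually (\<lambda>n. \<bar>f n (x m)\<bar> < e) sequentially" by eventually_elim simp
      qed
      then obtain N where N: "\<And>n. N \<le> n \<Longrightarrow> \<forall>m\<in>{..snd p}. \<bar>f n (x m)\<bar> < e"
        unfolding eventually_sequentially by blast
      obtain n m where nm: "max N (Suc (fst p)) \<le> n" "e \<le> \<bar>f n (x m)\<bar>" using bad by blast
      have "snd p < m"
      proof (rule ccontr)
        assume "\<not> snd p < m"
        then have "m \<in> {..snd p}" by simp
        then have "\<bar>f n (x m)\<bar> < e" using N[of n] nm(1) by auto
        then show False using nm(2) by simp
      qed
      then show ?thesis using nm by (intro exI[where x = "(n, m)"]) auto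
    qed
    have "\<exists>s. \<forall>k. e \<le> \<bar>f (fst (s k)) (x (snd (s k)))\<bar> \<and>
        (fst (s k) < fst (s (Suc k)) \<and> snd (s k) < snd (s (Suc k)))"
    proof (rule dependent_nat_choice[where P = "\<lambda>k q. e \<le> \<bar>f (fst q) (x (snd q))\<bar>"])
      show "\<exists>q. e \<le> \<bar>f (fst q) (x (snd q))\<bar>" using bad[of 0] by auto
    next
      fix q :: "nat \<times> nat" and k :: nat
      show "\<exists>q'. e \<le> \<bar>f (fst q') (x (snd q'))\<bar> \<and> (fst q < fst q' \<and> snd q < snd q')"
        by (rule step)
    qed
    then obtain s where s: "\<And>k. e \<le> \<bar>f (fst (s k)) (x (snd (s k)))\<bar>"
      "\<And>k. fst (s k) < fst (s (Suc k))" "\<And>k. snd (s k) < snd (s (Suc k))"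
      by blast
    define nk where "nk k = fst (s k)" for k
    define mk where "mk k = snd (s k)" for k
    have sm_n: "strict_mono nk" unfolding strict_mono_Suc_iff nk_def using s(2) by blast
    have sm_m: "strict_mono mk" unfolding strict_mono_Suc_iff mk_def using s(3) by blast
    have inj_m: "inj mk" using sm_m by (rule strict_mono_imp_inj_on)
    define u where "u k = lmod (x (mk k))" for k
    have u0: "0 \<le> u k" for k unfolding u_def by (rule lmod_ge0)
    have ud: "inf (u i) (u j) = 0" if "i \<noteq> j" for i j
    proof -
      have "mk i \<noteq> mk j" using inj_m that by (auto dest: injD)
      then show ?thesis using dj unfolding u_def disjoint_elems_def by blast
    qed
    define g where "g k = Qf (u k) (f (nk k))" for k
    have gdisj: "\<forall>i j. i \<noteq> j \<longrightarrow> disjoint_dual (g i) (g j)"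
      unfolding g_def by (intro allI impI Q_disjoint u0 ud)
    have gwn: "weakly_null_dual g"
      unfolding weakly_null_dual_def
    proof
      fix \<phi> :: "('a \<Rightarrow>\<^sub>L real) \<Rightarrow>\<^sub>L real"
      have "(\<lambda>k. (\<phi> o\<^sub>L Qb (u k)) (f (nk k))) \<longlonglongrightarrow> 0"
      proof (rule schur_diag[where C = "norm \<phi> * 3"])
        fix F :: "nat set" and v assume F: "finite F"
        show "(\<Sum>k\<in>F. \<bar>(\<phi> o\<^sub>L Qb (u k)) v\<bar>) \<le> norm \<phi> * 3 * norm v"
          using Q_sum_bound[OF u0 ud F, where \<phi> = \<phi> and v = v] by (simp add: Qb_apply u0)
      next
        fix \<Phi> :: "('a \<Rightarrow>\<^sub>L real) \<Rightarrow>\<^sub>L real"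
        have "(\<lambda>n. \<Phi> (f n)) \<longlonglongrightarrow> 0" using wn unfolding weakly_null_dual_def by blast
        from LIMSEQ_subseq_LIMSEQ[OF this sm_n] show "(\<lambda>k. \<Phi> (f (nk k))) \<longlonglongrightarrow> 0"
          by (simp add: o_def)
      qed
      then show "(\<lambda>k. \<phi> (g k)) \<longlonglongrightarrow> 0" by (simp add: g_def Qb_apply u0)
    qed
    have "unif_null_on g (range x)" using adp gdisj gwn unfolding almost_DP_set_def by blast
    then have "eventually (\<lambda>k. \<forall>z\<in>range x. \<bar>g k z\<bar> < e) sequentially"
      using e(1) unfolding unif_null_on_def by blast
    then obtain k where k: "\<forall>z\<in>range x. \<bar>g k z\<bar> < e"
      unfolding eventually_sequentially by blast
    then have "\<bar>g k (x (mk k))\<bar> < e" by blast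
    moreover have "g k (x (mk k)) = f (nk k) (x (mk k))" unfolding g_def u_def by (rule Q_id) simp
    moreover have "e \<le> \<bar>f (nk k) (x (mk k))\<bar>" using s(1)[of k] unfolding nk_def mk_def .
    ultimately show False by simp
  qed
qed

end
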